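(* Let $f:\mathbb{R}^\ell\times\mathbb{R}^m\to\mathbb{R}^\ell$ be $C^1$, let $\Lambda$ be a parameter shift with limits $\lambda_\pm$, and let $X$ define a stable path with endpoints $X_\pm$. Fix $r>0$ and let $\{x_n^r\}_{n\in\mathbb{Z}}$ be the unique solution of $x_{n+1}=f(x_n,\Lambda(rn))$ with $\lim_{n\to-\infty}x_n^r=X_-$. Then there exists an open set $U\subset\mathbb{R}^\ell$ containing $X_-$ such that for all $y\in U$ and all $n_1\in\mathbb{Z}$, $$\lim_{n_0\to-\infty}\|\phi(n_1,n_0,y)-x_{n_1}^r\|=0.$$
   Context: A parameter shift is a $C^1$ function $\Lambda:\mathbb{R}\to\mathbb{R}^m$ with $\lim_{s\to\pm\infty}\Lambda(s)=\lambda_\pm$ and $\lim_{s\to\pm\infty}\Lambda'(s)=0$. A stable path is given by $X:\mathbb{R}\to\mathbb{R}^\ell$ such that: $X(s)$ is a fixed point of $f(\cdot,\Lambda(s))$ for every $s$; $\{(s,X(s))\}$ is a connected curve; the limits $X_\pm=\lim_{s\to\pm\infty}X(s)$ exist and are fixed points of $f(\cdot,\lambda_\pm)$; and the spectral radius of $D_xf(X(s),\Lambda(s))$ is $<1$ for all $s\in\mathbb{R}\cup\{\pm\infty\}$ (with $X(\pm\infty)=X_\pm$, $\Lambda(\pm\infty)=\lambda_\pm$). (It is known that a unique solution $\{x^r_n\}$ with $x^r_n\to X_-$ as $n\to-\infty$ exists.) For integers $n_0\le n_1$ and $y\in\mathbb{R}^\ell$, $\phi(n_1,n_0,y)$ denotes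 $y_{n_1}$, where $\{y_n\}_{n\ge n_0}$ is the forward orbit of $y_{n+1}=f(y_n,\Lambda(rn))$ with $y_{n_0}=y$. *)

theory Defs
  imports "HOL-Analysis.Analysis"
begin

definition mat_eigenvalues :: "real^'n^'n \<Rightarrow> complex set" where
  "mat_eigenvalues A = {z. det ((\<chi> i j. complex_of_real (A $ i $ j)) - (\<chi> i j. if i = j then z else 0)) = 0}"

definition mat_spectral_radius :: "real^'n^'n \<Rightarrow> real" where
  "mat_spectral_radius A = Sup (cmod ` mat_eigenvalues A)"

definition C1_with :: "('a::real_normed_vector \<Rightarrow> 'b::real_normed_vector) \<Rightarrow> ('a \<Rightarrow> 'a \<Rightarrow>\<^sub>L 'b) \<Rightarrow> bool" where
  "C1_with g Dg \<longleftrightarrow> (\<forall>z. (g has_derivative blinfun_apply (Dg z)) (at z)) \<and> continuous_on UNIV Dg"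

definition Dx_mat :: "((real^'l) \<times> (real^'m) \<Rightarrow> ((real^'l) \<times> (real^'m)) \<Rightarrow>\<^sub>L (real^'l)) \<Rightarrow> real^'l \<Rightarrow> real^'m \<Rightarrow> real^'l^'l" where
  "Dx_mat Df x p = matrix (\<lambda>v. blinfun_apply (Df (x, p)) (v, 0))"

definition parameter_shift :: "(real \<Rightarrow> real^'m) \<Rightarrow> real^'m \<Rightarrow> real^'m \<Rightarrow> bool" where
  "parameter_shift \<Lambda> lm lp \<longleftrightarrow>
     (\<exists>\<Lambda>'. (\<forall>s. (\<Lambda> has_vector_derivative \<Lambda>' s) (at s)) \<and> continuous_on UNIV \<Lambda>' \<and>
            (\<Lambda>' \<longlongrightarrow> 0) at_top \<and> (\<Lambda>' \<longlongrightarrow> 0) at_bot) \<and>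
     (\<Lambda> \<longlongrightarrow> lp) at_top \<and> (\<Lambda> \<longlongrightarrow> lm) at_bot"

definition stable_path ::
  "(real^'l \<Rightarrow> real^'m \<Rightarrow> real^'l) \<Rightarrow> ((real^'l) \<times> (real^'m) \<Rightarrow> ((real^'l) \<times> (real^'m)) \<Rightarrow>\<^sub>L (real^'l))
   \<Rightarrow> (real \<Rightarrow> real^'m) \<Rightarrow> real^'m \<Rightarrow> real^'m \<Rightarrow> (real \<Rightarrow> real^'l) \<Rightarrow> real^'l \<Rightarrow> real^'l \<Rightarrow> bool" where
  "stable_path f Df \<Lambda> lm lp X Xm Xp \<longleftrightarrow>
     (\<forall>s. f (X s) (\<Lambda> s) = X s) \<and>
     connected ((\<lambda>s. (s, X s)) ` UNIV) \<and>
     (X \<longlongrightarrow> Xp) at_top \<and> (X \<longlongrightarrow> Xm) at_bot \<and>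
     f Xp lp = Xp \<and> f Xm lm = Xm \<and>
     (\<forall>s. mat_spectral_radius (Dx_mat Df (X s) (\<Lambda> s)) < 1) \<and>
     mat_spectral_radius (Dx_mat Df Xp lp) < 1 \<and>
     mat_spectral_radius (Dx_mat Df Xm lm) < 1"

text \<open>Forward orbit: orbit ... n0 y k = y_{n0+k}, with y_{n+1} = f(y_n, \<Lambda>(r n)).\<close>
fun orbit :: "('a \<Rightarrow> 'p \<Rightarrow> 'a) \<Rightarrow> (real \<Rightarrow> 'p) \<Rightarrow> real \<Rightarrow> int \<Rightarrow> 'a \<Rightarrow> nat \<Rightarrow> 'a" where
  "orbit f \<Lambda> r n0 y 0 = y"
| "orbit f \<Lambda> r n0 y (Suc k) = f (orbit f \<Lambda> r n0 y k) (\<Lambda> (r * real_of_int (n0 + int k)))"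

text \<open>phi(n1,n0,y) = y_{n1}; meaningful for n0 \<le> n1.\<close>
definition phi :: "('a \<Rightarrow> 'p \<Rightarrow> 'a) \<Rightarrow> (real \<Rightarrow> 'p) \<Rightarrow> real \<Rightarrow> int \<Rightarrow> int \<Rightarrow> 'a \<Rightarrow> 'a" where
  "phi f \<Lambda> r n1 n0 y = orbit f \<Lambda> r n0 y (nat (n1 - n0))"

end

theory Submission
  imports Defs "Jordan_Normal_Form.Spectral_Radius"
begin

no_notation vec_index (infixl "$" 100)
hide_const (open) Determinant.det

lemma det_zero_ker:
  fixes C :: "complex^'n^'n"
  shows "det C = 0 \<longleftrightarrow> (\<exists>x. x \<noteq> 0 \<and> C *v x = 0)"
  using invertible_det_nz[of C] invertible_left_inverse[of C] matrix_left_invertible_ker[of C]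
  by metis

lemma eig_component:
  fixes A :: "real^'n^'n"
  assumes "(\<chi> i j. complex_of_real (A $ i $ j)) *v x - z *s x = 0"
  shows "(\<Sum>j\<in>UNIV. complex_of_real (A $ i $ j) * x $ j) = z * x $ i"
proof -
  have "((\<chi> i j. complex_of_real (A $ i $ j)) *v x - z *s x) $ i = 0" using assms by simp
  thus ?thesis by (simp add: matrix_vector_mult_def)
qed

lemma mat_eig_iff:
  fixes A :: "real^'n^'n"
  shows "z \<in> mat_eigenvalues A \<longleftrightarrow> (\<exists>x. x \<noteq> 0 \<and> (\<chi> i j. complex_of_real (A $ i $ j)) *v x - z *s x = 0)"
proof -
  have "((\<chi> i j. complex_of_real (A $ i $ j)) - (\<chi> i j. if i = j then z else 0)) *v x
     = (\<chi> i j. complex_of_real (A $ i $ j)) *v x - z *s x" for x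
  proof -
    have h: "(if i = j then z else 0) * x $ j = (if j = i then z * x $ i else 0)" for i j :: 'n
      by auto
    show ?thesis
      unfolding Finite_Cartesian_Product.vec_eq_iff by (simp add: matrix_vector_mult_def sum_subtractf left_diff_distrib h)
  qed
  thus ?thesis by (simp only: mat_eigenvalues_def mem_Collect_eq det_zero_ker)
qed

lemma mat_eig_bound:
  fixes A :: "real^'n^'n"
  assumes "z \<in> mat_eigenvalues A"
  shows "cmod z \<le> (\<Sum>i\<in>UNIV. \<Sum>j\<in>UNIV. \<bar>A $ i $ j\<bar>)"
proof -
  obtain x where x: "x \<noteq> 0" and e: "(\<chi> i j. complex_of_real (A $ i $ j)) *v x - z *s x = 0"
    using assms mat_eig_iff by blast
  define m where "m = Max (range (\<lambda>j. cmod (x $ j)))"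
  have mge: "cmod (x $ j) \<le> m" for j unfolding m_def by (rule Max_ge) auto
  have "m \<in> range (\<lambda>j. cmod (x $ j))" unfolding m_def by (rule Max_in) auto
  then obtain i0 where i0: "m = cmod (x $ i0)" by auto
  have mpos: "m > 0"
  proof (rule ccontr)
    assume "\<not> m > 0"
    then have "x $ j = 0" for j using mge[of j] by (meson norm_ge_zero norm_le_zero_iff order_trans not_less)
    then have "x = 0" by (simp add: Finite_Cartesian_Product.vec_eq_iff)
    then show False using x by simp
  qed
  have "cmod z * m = cmod (\<Sum>j\<in>UNIV. complex_of_real (A $ i0 $ j) * x $ j)"
    using eig_component[OF e, of i0] i0 by (simp add: norm_mult)
  also have "\<dots> \<le> (\<Sum>j\<in>UNIV. \<bar>A $ i0 $ j\<bar> * m)"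
    by (rule order_trans[OF norm_sum sum_mono]) (simp add: norm_mult mge mult_left_mono)
  also have "\<dots> = (\<Sum>j\<in>UNIV. \<bar>A $ i0 $ j\<bar>) * m" by (simp add: sum_distrib_right)
  finally have "cmod z \<le> (\<Sum>j\<in>UNIV. \<bar>A $ i0 $ j\<bar>)" using mpos by simp
  also have "\<dots> \<le> (\<Sum>i\<in>UNIV. \<Sum>j\<in>UNIV. \<bar>A $ i $ j\<bar>)"
    by (rule member_le_sum) (auto intro: sum_nonneg)
  finally show ?thesis .
qed

lemma mat_eig_bdd: "bdd_above (cmod ` mat_eigenvalues (A::real^'n^'n))"
  using mat_eig_bound by (meson bdd_aboveI2 mat_eig_bound)

lemma jnf_transfer:
  fixes A :: "real^'n^'n" and s :: real and z :: complex
  assumes s: "s > 0" and h: "bij_betw h {0..<CARD('n)} (UNIV::'n set)"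
    and ev: "eigenvalue (Matrix.mat CARD('n) CARD('n) (\<lambda>(i,j). complex_of_real (A $ h i $ h j / s))) z"
  shows "complex_of_real s * z \<in> mat_eigenvalues A"
proof -
  define n where "n = CARD('n)"
  define M where "M = Matrix.mat n n (\<lambda>(i,j). complex_of_real (A $ h i $ h j / s))"
  obtain v where v: "v \<in> carrier_vec n" "v \<noteq> 0\<^sub>v n" "M *\<^sub>v v = z \<cdot>\<^sub>v v"
    using ev unfolding eigenvalue_def eigenvector_def M_def n_def by auto
  define g where "g = the_inv_into {0..<n} h"
  have inj: "inj_on h {0..<n}" using h bij_betw_def n_def by blast
  have gh: "g (h i) = i" if "i < n" for i unfolding g_def using the_inv_into_f_f[OF inj] that by auto
  have hg: "h (g a) = a" for a unfolding g_def using f_the_inv_into_f[OF inj] h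
    by (metis UNIV_I bij_betw_def n_def)
  have gn: "g a < n" for a unfolding g_def using the_inv_into_into[OF inj] h
    by (metis UNIV_I atLeastLessThan_iff bij_betw_def n_def subsetI)
  define w where "w = (\<chi> a. vec_index v (g a))"
  have dv: "dim_vec v = n" using v(1) by auto
  obtain i where i: "i < n" "vec_index v i \<noteq> 0"
    using v(2) dv by (metis eq_vecI index_zero_vec(1) index_zero_vec(2))
  have "w $ h i \<noteq> 0" unfolding w_def using gh[OF i(1)] i(2) by simp
  then have w0: "w \<noteq> 0" by auto
  have Mv: "(\<Sum>j\<in>{0..<n}. M $$ (i, j) * vec_index v j) = z * vec_index v i" if "i < n" for i
  proof -
    have "vec_index (M *\<^sub>v v) i = z * vec_index v i" using v(3) that dv by simp
    moreover have "vec_index (M *\<^sub>v v) i = (\<Sum>j\<in>{0..<n}. M $$ (i, j) * vec_index v j)"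
      using that dv unfolding M_def by (simp add: scalar_prod_def)
    ultimately show ?thesis by simp
  qed
  have comp: "(\<Sum>b\<in>UNIV. complex_of_real (A $ a $ b) * w $ b) = (complex_of_real s * z) * w $ a" for a
  proof -
    have "(\<Sum>b\<in>UNIV. complex_of_real (A $ a $ b) * w $ b)
        = (\<Sum>j\<in>{0..<n}. complex_of_real (A $ a $ h j) * w $ h j)"
      using sum.reindex_bij_betw[OF h, of "\<lambda>b. complex_of_real (A $ a $ b) * w $ b"] n_def by simp
    also have "\<dots> = (\<Sum>j\<in>{0..<n}. complex_of_real s * (M $$ (g a, j) * vec_index v j))"
      by (rule sum.cong) (use s in \<open>auto simp: M_def w_def gh hg gn\<close>)
    also have "\<dots> = complex_of_real s * (z * vec_index v (g a))"
      by (simp add: sum_distrib_left[symmetric] Mv gn)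
    finally show ?thesis by (simp add: w_def)
  qed
  have "(\<chi> i j. complex_of_real (A $ i $ j)) *v w - (complex_of_real s * z) *s w = 0"
    unfolding Finite_Cartesian_Product.vec_eq_iff using comp by (simp add: matrix_vector_mult_def)
  then show ?thesis using mat_eig_iff w0 by blast
qed

lemma linear_funpow: "linear (L::'a::real_vector \<Rightarrow> 'a) \<Longrightarrow> linear (L^^k)"
  by (induction k) (auto simp: linear_compose linear_id id_def[symmetric])

lemma matrix_works_real: "linear (f::real^'n \<Rightarrow> real^'m) \<Longrightarrow> matrix f *v x = f x"
  using matrix_vector_mul(2)[of f] by metis

lemma pow_entries:
  fixes L :: "real^'n \<Rightarrow> real^'n" and s :: real
  assumes L: "linear L" and s: "s > 0" and h: "bij_betw h {0..<CARD('n)} (UNIV::'n set)"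
    and i: "i < CARD('n)" and j: "j < CARD('n)"
  shows "(Matrix.mat CARD('n) CARD('n) (\<lambda>(i,j). complex_of_real (matrix L $ h i $ h j / s)) ^\<^sub>m k) $$ (i,j)
     = complex_of_real (matrix (L^^k) $ h i $ h j / s^k)"
  using i j
proof (induction k arbitrary: i j)
  case 0
  have inj: "inj_on h {0..<CARD('n)}" using h bij_betw_def by blast
  have "(h i = h j) = (i = j)" using inj 0 by (auto dest: inj_onD)
  then show ?case using 0 by (simp add: matrix_def axis_def)
next
  case (Suc k)
  define n where "n = CARD('n)"
  define M where "M = Matrix.mat n n (\<lambda>(i,j). complex_of_real (matrix L $ h i $ h j / s))"
  have Mc: "M \<in> carrier_mat n n" unfolding M_def by simp
  have Mk: "M ^\<^sub>m k \<in> carrier_mat n n" using Mc by simp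
  have IH: "(M ^\<^sub>m k) $$ (i,l) = complex_of_real (matrix (L^^k) $ h i $ h l / s^k)" if "l < n" for l
    using Suc.IH[of i l] Suc.prems that unfolding M_def n_def by simp
  have "(M ^\<^sub>m Suc k) $$ (i,j) = (\<Sum>l\<in>{0..<n}. (M ^\<^sub>m k) $$ (i,l) * M $$ (l,j))"
    using Mc Mk Suc.prems unfolding n_def[symmetric] by (simp add: scalar_prod_def)
  also have "\<dots> = (\<Sum>l\<in>{0..<n}. complex_of_real (matrix (L^^k) $ h i $ h l * matrix L $ h l $ h j / s^Suc k))"
  proof (rule sum.cong)
    fix l assume "l \<in> {0..<n}"
    then have l: "l < n" by simp
    have Ml: "M $$ (l,j) = complex_of_real (matrix L $ h l $ h j / s)"
      unfolding M_def using l Suc.prems n_def by simp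
    have "matrix (L^^k) $ h i $ h l / s^k * (matrix L $ h l $ h j / s)
        = matrix (L^^k) $ h i $ h l * matrix L $ h l $ h j / s^Suc k" by simp
    then show "(M ^\<^sub>m k) $$ (i,l) * M $$ (l,j)
        = complex_of_real (matrix (L^^k) $ h i $ h l * matrix L $ h l $ h j / s^Suc k)"
      unfolding IH[OF l] Ml of_real_mult[symmetric] by simp
  qed simp
  also have "\<dots> = complex_of_real ((\<Sum>l\<in>UNIV. matrix (L^^k) $ h i $ l * matrix L $ l $ h j) / s^Suc k)"
  proof -
    have r: "(\<Sum>l\<in>UNIV. matrix (L^^k) $ h i $ l * matrix L $ l $ h j)
        = (\<Sum>l\<in>{0..<n}. matrix (L^^k) $ h i $ h l * matrix L $ h l $ h j)"
      using sum.reindex_bij_betw[OF h, of "\<lambda>l. matrix (L^^k) $ h i $ l * matrix L $ l $ h j"]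
      by (simp add: n_def)
    show ?thesis unfolding r sum_divide_distrib of_real_sum ..
  qed
  also have "(\<Sum>l\<in>UNIV. matrix (L^^k) $ h i $ l * matrix L $ l $ h j) = (matrix (L^^k) ** matrix L) $ h i $ h j"
    by (simp add: matrix_matrix_mult_def)
  also have "matrix (L^^k) ** matrix L = matrix (L^^Suc k)"
    using matrix_compose[OF L linear_funpow[OF L, of k]] by (simp only: funpow_Suc_right)
  finally show ?case unfolding M_def n_def .
qed

lemma spectral_decay:
  fixes L :: "real^'n \<Rightarrow> real^'n"
  assumes L: "linear L" and sr: "mat_spectral_radius (matrix L) < 1"
  shows "\<exists>N>0. \<forall>v. norm ((L^^N) v) \<le> 1/4 * norm v"
proof -
  define \<rho> where "\<rho> = mat_spectral_radius (matrix L)"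
  define s where "s = (1 + max \<rho> 0) / 2"
  have s0: "s > 0" and s1: "s < 1" and \<rho>s: "\<rho> < s" using sr unfolding s_def \<rho>_def by auto
  define n where "n = CARD('n)"
  have n0: "n > 0" unfolding n_def by simp
  obtain h where h: "bij_betw h {0..<n} (UNIV::'n set)"
    using ex_bij_betw_nat_finite[of "UNIV::'n set"] unfolding n_def by auto
  define M where "M = Matrix.mat n n (\<lambda>(i,j). complex_of_real (matrix L $ h i $ h j / s))"
  have Mc: "M \<in> carrier_mat n n" unfolding M_def by simp
  have "spectral_radius M \<in> norm ` Spectral_Radius.spectrum M"
    by (rule spectral_radius_mem_max(1)[OF Mc n0])
  then obtain z where z: "eigenvalue M z" and zr: "spectral_radius M = cmod z"
    unfolding Spectral_Radius.spectrum_def by auto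
  have "complex_of_real s * z \<in> mat_eigenvalues (matrix L)"
    by (rule jnf_transfer[OF s0 h[unfolded n_def]]) (use z in \<open>simp add: M_def n_def\<close>)
  then have "cmod (complex_of_real s * z) \<le> \<rho>"
    unfolding \<rho>_def mat_spectral_radius_def by (intro cSup_upper mat_eig_bdd) auto
  then have a: "s * cmod z \<le> \<rho>" using s0 by (simp add: norm_mult)
  have "s * cmod z < s * 1" using a \<rho>s by linarith
  then have "cmod z < 1" using mult_less_cancel_left_pos[OF s0] by blast
  then have "spectral_radius M < 1" using zr by simp
  from spectral_radius_jnf_norm_bound_less_1_upper_triangular[OF Mc this]
  obtain c where c: "\<And>k. norm_bound (M ^\<^sub>m k) c" by auto
  have g: "\<exists>i<n. h i = a" for a
  proof -
    have "a \<in> h ` {0..<n}" using h unfolding bij_betw_def by simp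
    then show ?thesis by auto
  qed
  have ent: "\<bar>matrix (L^^k) $ a $ b\<bar> \<le> c * s^k" for k a b
  proof -
    obtain i j where ij: "i < n" "j < n" "h i = a" "h j = b" using g by metis
    have "norm ((M ^\<^sub>m k) $$ (i,j)) \<le> c" using c[of k] ij Mc unfolding norm_bound_def by simp
    moreover have "(M ^\<^sub>m k) $$ (i,j) = complex_of_real (matrix (L^^k) $ a $ b / s^k)"
      using pow_entries[OF L s0 h[unfolded n_def], of i j k] ij unfolding M_def n_def by simp
    ultimately have "norm (complex_of_real (matrix (L^^k) $ a $ b / s^k)) \<le> c" by metis
    then have "\<bar>matrix (L^^k) $ a $ b / s^k\<bar> \<le> c" by (simp only: norm_of_real)
    then have "\<bar>matrix (L^^k) $ a $ b\<bar> / s^k \<le> c" using s0 by (simp add: abs_divide)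
    then show ?thesis using s0 by (simp add: divide_le_eq mult.commute)
  qed
  have c0: "c \<ge> 0"
  proof -
    have "0 \<le> c * s^0" using ent[of 0] by (meson abs_ge_zero order_trans)
    then show ?thesis by simp
  qed
  have bound: "norm ((L^^k) v) \<le> (real n * real n * c * s^k) * norm v" for k v
  proof -
    have "norm ((L^^k) v) = norm (matrix (L^^k) *v v)" using matrix_works_real[OF linear_funpow[OF L]] by simp
    also have "\<dots> \<le> (\<Sum>i\<in>UNIV. \<bar>(matrix (L^^k) *v v) $ i\<bar>)" by (rule norm_le_l1_cart)
    also have "\<dots> \<le> (\<Sum>i\<in>(UNIV::'n set). \<Sum>j\<in>(UNIV::'n set). c * s^k * norm v)"
    proof (rule sum_mono)
      fix i
      have "\<bar>(matrix (L^^k) *v v) $ i\<bar> = \<bar>\<Sum>j\<in>UNIV. matrix (L^^k) $ i $ j * v $ j\<bar>"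
        by (simp add: matrix_vector_mult_def)
      also have "\<dots> \<le> (\<Sum>j\<in>UNIV. \<bar>matrix (L^^k) $ i $ j * v $ j\<bar>)" by (rule sum_abs)
      also have "\<dots> \<le> (\<Sum>j\<in>(UNIV::'n set). c * s^k * norm v)"
        unfolding abs_mult by (rule sum_mono, rule mult_mono) (auto simp: ent component_le_norm_cart c0 s0 less_imp_le)
      finally show "\<bar>(matrix (L^^k) *v v) $ i\<bar> \<le> (\<Sum>j\<in>(UNIV::'n set). c * s^k * norm v)" .
    qed
    also have "\<dots> = (real n * real n * c * s^k) * norm v" by (simp add: n_def)
    finally show ?thesis .
  qed
  have "(\<lambda>k. real n * real n * c * s^k) \<longlonglongrightarrow> real n * real n * c * 0"
    by (intro tendsto_intros) (use s0 s1 in simp)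
  then have "eventually (\<lambda>k. real n * real n * c * s^k < 1/4) sequentially"
    by (intro order_tendstoD(2)) auto
  then obtain K where K: "\<And>k. k \<ge> K \<Longrightarrow> real n * real n * c * s^k < 1/4"
    unfolding eventually_sequentially by blast
  show ?thesis
  proof (intro exI[of _ "Suc K"] conjI allI)
    fix v
    show "norm ((L^^Suc K) v) \<le> 1/4 * norm v"
      using bound[of "Suc K" v] K[of "Suc K"] by (meson le_SucI mult_right_mono norm_ge_zero order.trans order_refl less_imp_le)
  qed simp
qed


lemma block_aux:
  fixes L :: "'a::real_normed_vector \<Rightarrow> 'a" and e :: "nat \<Rightarrow> 'a"
  assumes L: "linear L" and a: "\<And>v. norm (L v) \<le> a * norm v" and a0: "a \<ge> 0"
    and eps: "0 \<le> \<epsilon>" "\<epsilon> \<le> 1"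
    and m: "m \<le> N"
    and step: "\<And>i. i < m \<Longrightarrow> norm (e i) \<le> K \<Longrightarrow> norm (e (Suc i) - L (e i)) \<le> \<epsilon> * norm (e i)"
    and e0: "(a+1)^N * norm (e 0) \<le> K"
  shows "i \<le> m \<Longrightarrow> norm (e i) \<le> (a+1)^i * norm (e 0) \<and>
            norm (e i - (L^^i) (e 0)) \<le> real i * \<epsilon> * (a+1)^i * norm (e 0)"
proof (induction i)
  case 0
  then show ?case by simp
next
  case (Suc i)
  then have im: "i < m" and IH1: "norm (e i) \<le> (a+1)^i * norm (e 0)"
    and IH2: "norm (e i - (L^^i) (e 0)) \<le> real i * \<epsilon> * (a+1)^i * norm (e 0)" by auto
  have "(a+1)^i \<le> (a+1)^N" using m im a0 by (intro power_increasing) auto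
  then have "(a+1)^i * norm (e 0) \<le> (a+1)^N * norm (e 0)" by (simp add: mult_right_mono)
  then have "norm (e i) \<le> K" using IH1 e0 by linarith
  then have r: "norm (e (Suc i) - L (e i)) \<le> \<epsilon> * norm (e i)" using step im by blast
  define P where "P = (a+1)^i * norm (e 0)"
  have P0: "P \<ge> 0" unfolding P_def using a0 by simp
  have ei: "\<epsilon> * norm (e i) \<le> \<epsilon> * P" using IH1 eps unfolding P_def by (simp add: mult_left_mono)
  have "norm (e (Suc i)) \<le> norm (L (e i)) + norm (e (Suc i) - L (e i))"
    by (metis diff_add_cancel norm_triangle_ineq add.commute)
  also have "\<dots> \<le> a * norm (e i) + 1 * norm (e i)"
    using a[of "e i"] r eps mult_right_mono[OF eps(2) norm_ge_zero[of "e i"]] by linarith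
  also have "\<dots> = (a+1) * norm (e i)" by (simp add: algebra_simps)
  also have "\<dots> \<le> (a+1) * P" using IH1 a0 unfolding P_def by (simp add: mult_left_mono)
  also have "\<dots> = (a+1)^Suc i * norm (e 0)" unfolding P_def by simp
  finally have A: "norm (e (Suc i)) \<le> (a+1)^Suc i * norm (e 0)" .
  have "e (Suc i) - (L^^Suc i) (e 0) = (e (Suc i) - L (e i)) + L (e i - (L^^i) (e 0))"
    using linear_diff[OF L] by simp
  then have "norm (e (Suc i) - (L^^Suc i) (e 0)) \<le> norm (e (Suc i) - L (e i)) + norm (L (e i - (L^^i) (e 0)))"
    by (metis norm_triangle_ineq)
  also have "\<dots> \<le> \<epsilon> * P + a * (real i * \<epsilon> * P)"
  proof -
    have "norm (L (e i - (L^^i) (e 0))) \<le> a * norm (e i - (L^^i) (e 0))" by (rule a)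
    also have "\<dots> \<le> a * (real i * \<epsilon> * P)" using IH2 a0 unfolding P_def
      by (simp add: mult_left_mono mult.assoc)
    finally show ?thesis using r ei by linarith
  qed
  also have "\<dots> \<le> real (Suc i) * \<epsilon> * (a+1) * P"
  proof -
    have "\<epsilon> * P + a * (real i * \<epsilon> * P) = (1 + a * real i) * (\<epsilon> * P)" by (simp add: algebra_simps)
    also have "\<dots> \<le> ((real i + 1) * (a + 1)) * (\<epsilon> * P)"
      by (rule mult_right_mono) (use a0 eps P0 in \<open>auto simp: algebra_simps\<close>)
    also have "\<dots> = real (Suc i) * \<epsilon> * (a+1) * P" by (simp add: algebra_simps)
    finally show ?thesis .
  qed
  also have "\<dots> = real (Suc i) * \<epsilon> * (a+1)^Suc i * norm (e 0)" unfolding P_def by (simp add: algebra_simps)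
  finally show ?case using A by blast
qed

lemma block:
  fixes L :: "'a::real_normed_vector \<Rightarrow> 'a" and e :: "nat \<Rightarrow> 'a"
  assumes L: "linear L" and a: "\<And>v. norm (L v) \<le> a * norm v" and a0: "a \<ge> 0"
    and eps: "0 \<le> \<epsilon>" "\<epsilon> \<le> 1"
    and LN: "\<And>v. norm ((L^^N) v) \<le> 1/4 * norm v"
    and small: "real N * \<epsilon> * (a+1)^N \<le> 1/4"
    and m: "m \<le> N"
    and step: "\<And>i. i < m \<Longrightarrow> norm (e i) \<le> K \<Longrightarrow> norm (e (Suc i) - L (e i)) \<le> \<epsilon> * norm (e i)"
    and e0: "(a+1)^N * norm (e 0) \<le> K"
  shows "\<And>i. i \<le> m \<Longrightarrow> norm (e i) \<le> (a+1)^i * norm (e 0)"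
    and "m = N \<Longrightarrow> norm (e N) \<le> 1/2 * norm (e 0)"
proof -
  note aux = block_aux[OF L a a0 eps m step e0]
  show "\<And>i. i \<le> m \<Longrightarrow> norm (e i) \<le> (a+1)^i * norm (e 0)" using aux by blast
  assume mN: "m = N"
  have d: "norm (e N - (L^^N) (e 0)) \<le> real N * \<epsilon> * (a+1)^N * norm (e 0)" using aux[of N] mN by blast
  have "norm (e N) \<le> norm ((L^^N) (e 0)) + norm (e N - (L^^N) (e 0))"
    by (metis diff_add_cancel norm_triangle_ineq add.commute)
  also have "\<dots> \<le> 1/4 * norm (e 0) + 1/4 * norm (e 0)"
    using LN[of "e 0"] d mult_right_mono[OF small norm_ge_zero[of "e 0"]] by linarith
  finally show "norm (e N) \<le> 1/2 * norm (e 0)" by simp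
qed

lemma orbit_add:
  "orbit f \<Lambda> r n0 y (j + k) = orbit f \<Lambda> r (n0 + int j) (orbit f \<Lambda> r n0 y j) k"
  by (induction k) (simp_all add: add.assoc)

lemma orbit_sol:
  assumes "\<forall>n. x (n + 1) = f (x n) (\<Lambda> (r * real_of_int n))"
  shows "orbit f \<Lambda> r n (x n) k = x (n + int k)"
proof (induction k)
  case 0
  then show ?case by simp
next
  case (Suc k)
  have "x (n + int (Suc k)) = x ((n + int k) + 1)" by (simp add: ac_simps)
  also have "\<dots> = f (x (n + int k)) (\<Lambda> (r * real_of_int (n + int k)))" using assms by blast
  finally show ?case using Suc by simp
qed

lemma orbit_cont:
  assumes "\<And>p. continuous_on UNIV (\<lambda>u. f u p)"
  shows "continuous_on UNIV (\<lambda>y. orbit f \<Lambda> r n0 y k)"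
proof (induction k)
  case 0
  then show ?case by (simp add: continuous_on_id)
next
  case (Suc k)
  show ?case
    using continuous_on_compose2[OF assms Suc] by simp
qed

theorem mainTheorem2:
  fixes f :: "real^'l \<Rightarrow> real^'m \<Rightarrow> real^'l"
    and Df :: "(real^'l) \<times> (real^'m) \<Rightarrow> ((real^'l) \<times> (real^'m)) \<Rightarrow>\<^sub>L (real^'l)"
    and \<Lambda> :: "real \<Rightarrow> real^'m" and lm lp :: "real^'m"
    and X :: "real \<Rightarrow> real^'l" and Xm Xp :: "real^'l"
    and r :: real and x :: "int \<Rightarrow> real^'l"
  assumes "C1_with (\<lambda>(u, p). f u p) Df"
    and "parameter_shift \<Lambda> lm lp"
    and "stable_path f Df \<Lambda> lm lp X Xm Xp"
    and "r > 0"
    and "\<forall>n. x (n + 1) = f (x n) (\<Lambda> (r * real_of_int n))"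
    and "(x \<longlongrightarrow> Xm) at_bot"
  shows "\<exists>U. open U \<and> Xm \<in> U \<and>
           (\<forall>y\<in>U. \<forall>n1::int. ((\<lambda>n0::int. norm (phi f \<Lambda> r n1 n0 y - x n1)) \<longlongrightarrow> 0) at_bot)"
proof -
  note C1 = assms(1) and r0 = assms(4) and xsol = assms(5) and xlim = assms(6)
  have der: "\<And>z. ((\<lambda>(u, p). f u p) has_derivative blinfun_apply (Df z)) (at z)"
    and Dcont: "continuous_on UNIV Df" using C1 unfolding C1_with_def by auto
  have srm: "mat_spectral_radius (Dx_mat Df Xm lm) < 1"
    using assms(3) unfolding stable_path_def by blast
  have \<Lambda>lim: "(\<Lambda> \<longlongrightarrow> lm) at_bot" using assms(2) unfolding parameter_shift_def by blast
  have pder: "((\<lambda>u. f u p) has_derivative (\<lambda>v. blinfun_apply (Df (u, p)) (v, 0))) (at u)" for u p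
  proof -
    have "((\<lambda>u. (u, p)) has_derivative (\<lambda>v. (v, 0))) (at u)"
      by (intro has_derivative_Pair has_derivative_ident has_derivative_const)
    from has_derivative_compose[OF this der[of "(u,p)"]] show ?thesis by simp
  qed
  have fcont: "continuous_on UNIV (\<lambda>u. f u p)" for p
    by (intro continuous_at_imp_continuous_on ballI has_derivative_continuous[OF pder])
  define L where "L = (\<lambda>v. blinfun_apply (Df (Xm, lm)) (v, 0))"
  have Lbl: "bounded_linear L" unfolding L_def
    by (intro bounded_linear_compose[OF blinfun.bounded_linear_right] bounded_linear_Pair
        bounded_linear_ident bounded_linear_zero)
  then have Llin: "linear L" by (rule bounded_linear.linear)
  have "matrix L = Dx_mat Df Xm lm" unfolding L_def Dx_mat_def ..
  then obtain N where N0: "N > 0" and LN: "\<And>v. norm ((L^^N) v) \<le> 1/4 * norm v"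
    using spectral_decay[OF Llin] srm by auto
  define a where "a = norm (Df (Xm, lm))"
  have a0: "a \<ge> 0" unfolding a_def by simp
  have La: "norm (L v) \<le> a * norm v" for v
    unfolding L_def a_def using norm_blinfun[of "Df (Xm, lm)" "(v, 0)"] by simp
  define C where "C = (a+1)^N"
  have C1': "C \<ge> 1" unfolding C_def using a0 by simp
  define \<epsilon> where "\<epsilon> = min 1 (1 / (4 * real N * C))"
  have \<epsilon>0: "\<epsilon> > 0" and \<epsilon>1: "\<epsilon> \<le> 1" unfolding \<epsilon>_def using N0 C1' by auto
  have small: "real N * \<epsilon> * (a+1)^N \<le> 1/4"
  proof -
    have "real N * \<epsilon> * C \<le> real N * (1 / (4 * real N * C)) * C"
      using C1' N0 by (intro mult_right_mono mult_left_mono) (auto simp: \<epsilon>_def)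
    also have "\<dots> = 1/4" using C1' N0 by simp
    finally show ?thesis unfolding C_def .
  qed
  obtain \<delta>0 where \<delta>0: "\<delta>0 > 0" and \<delta>0D: "\<And>z. dist z (Xm, lm) < \<delta>0 \<Longrightarrow> dist (Df z) (Df (Xm, lm)) < \<epsilon>"
  proof -
    have "\<exists>d>0. \<forall>x'\<in>UNIV. dist x' (Xm,lm) < d \<longrightarrow> dist (Df x') (Df (Xm,lm)) < \<epsilon>"
      using continuous_on_iff[THEN iffD1, OF Dcont, rule_format, OF UNIV_I \<epsilon>0] .
    then obtain d where "d > 0" "\<And>x'. dist x' (Xm,lm) < d \<Longrightarrow> dist (Df x') (Df (Xm,lm)) < \<epsilon>"
      by auto
    then show ?thesis by (rule that)
  qed
  define \<delta> where "\<delta> = \<delta>0 / 2"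
  have \<delta>: "\<delta> > 0" unfolding \<delta>_def using \<delta>0 by simp
  have Dclose: "norm (blinfun_apply (Df (u, p)) (v, 0) - L v) \<le> \<epsilon> * norm v"
    if "u \<in> ball Xm \<delta>" "p \<in> ball lm \<delta>" for u p v
  proof -
    have "dist (u, p) (Xm, lm) \<le> norm (u - Xm) + norm (p - lm)"
      using norm_Pair_le[of "u - Xm" "p - lm"] by (simp add: dist_norm)
    also have "\<dots> < \<delta>0" using that unfolding \<delta>_def by (simp add: dist_norm norm_minus_commute)
    finally have "norm (Df (u, p) - Df (Xm, lm)) < \<epsilon>" using \<delta>0D by (simp add: dist_norm)
    moreover have "norm (blinfun_apply (Df (u, p)) (v, 0) - L v) = norm (blinfun_apply (Df (u, p) - Df (Xm, lm)) (v, 0))"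
      unfolding L_def by (simp add: blinfun.diff_left)
    moreover have "norm (blinfun_apply (Df (u, p) - Df (Xm, lm)) (v, 0)) \<le> norm (Df (u, p) - Df (Xm, lm)) * norm v"
      using norm_blinfun[of "Df (u, p) - Df (Xm, lm)" "(v, 0)"] by simp
    moreover have "norm (Df (u, p) - Df (Xm, lm)) * norm v \<le> \<epsilon> * norm v"
      using calculation(1) by (intro mult_right_mono) auto
    ultimately show ?thesis by linarith
  qed
  have mvt: "norm (f u1 p - f u2 p - L (u1 - u2)) \<le> \<epsilon> * norm (u1 - u2)"
    if "u1 \<in> ball Xm \<delta>" "u2 \<in> ball Xm \<delta>" "p \<in> ball lm \<delta>" for u1 u2 p
  proof -
    have "norm ((f u1 p - L u1) - (f u2 p - L u2)) \<le> \<epsilon> * norm (u1 - u2)"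
    proof (rule differentiable_bound[where S="ball Xm \<delta>" and f'="\<lambda>u v. blinfun_apply (Df (u, p)) (v, 0) - L v"])
      show "convex (ball Xm \<delta>)" by simp
      fix u assume u: "u \<in> ball Xm \<delta>"
      show "((\<lambda>u. f u p - L u) has_derivative (\<lambda>v. blinfun_apply (Df (u, p)) (v, 0) - L v)) (at u within ball Xm \<delta>)"
      proof -
        have d2: "(L has_derivative L) (at u)" by (rule bounded_linear_imp_has_derivative[OF Lbl])
        have "((\<lambda>u. f u p - L u) has_derivative (\<lambda>v. blinfun_apply (Df (u, p)) (v, 0) - L v)) (at u)"
          using has_derivative_diff[OF pder d2] .
        then show ?thesis by (rule has_derivative_at_withinI)
      qed
      show "onorm (\<lambda>v. blinfun_apply (Df (u, p)) (v, 0) - L v) \<le> \<epsilon>"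
        by (rule onorm_le) (rule Dclose[OF u that(3)])
    qed (use that in auto)
    moreover have "f u1 p - f u2 p - L (u1 - u2) = (f u1 p - L u1) - (f u2 p - L u2)"
      unfolding linear_diff[OF Llin] by (simp add: algebra_simps)
    ultimately show ?thesis by metis
  qed
  define \<eta> where "\<eta> = \<delta> / (4 * C)"
  have \<eta>0: "\<eta> > 0" unfolding \<eta>_def using \<delta> C1' by simp
  have \<eta>\<delta>: "\<eta> \<le> \<delta> / 2"
    unfolding \<eta>_def by (rule divide_left_mono) (use \<delta> C1' in auto)
  have C\<eta>: "C * (2 * \<eta>) = \<delta> / 2" unfolding \<eta>_def using C1' by simp
  have ev1: "eventually (\<lambda>n. dist (x n) Xm < \<eta>) at_bot"
    using xlim \<eta>0 by (rule tendstoD)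
  have "eventually (\<lambda>s. dist (\<Lambda> s) lm < \<delta>) at_bot"
    using \<Lambda>lim \<delta> by (rule tendstoD)
  then obtain S where S: "\<And>s. s \<le> S \<Longrightarrow> dist (\<Lambda> s) lm < \<delta>"
    unfolding eventually_at_bot_linorder by blast
  have ev2: "eventually (\<lambda>n::int. dist (\<Lambda> (r * real_of_int n)) lm < \<delta>) at_bot"
  proof (rule eventually_at_bot_linorderI[of "\<lfloor>S / r\<rfloor>"])
    fix n :: int assume "n \<le> \<lfloor>S / r\<rfloor>"
    then have "real_of_int n \<le> S / r" by linarith
    then have "r * real_of_int n \<le> S" using r0 by (simp add: field_simps)
    then show "dist (\<Lambda> (r * real_of_int n)) lm < \<delta>" by (rule S)
  qed
  obtain M where M: "\<And>n. n \<le> M \<Longrightarrow> dist (x n) Xm < \<eta> \<and> dist (\<Lambda> (r * real_of_int n)) lm < \<delta>"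
    using eventually_conj[OF ev1 ev2] unfolding eventually_at_bot_linorder by blast
  have est: "norm (orbit f \<Lambda> r n0 y j - x (n0 + int j)) \<le> C * (2 * \<eta>) * (1/2) ^ (j div N)"
    if y: "y \<in> ball Xm \<eta>" and n0: "n0 + int j \<le> M" for y n0 j
  proof -
    define E where "E j = orbit f \<Lambda> r n0 y j - x (n0 + int j)" for j
    have stepE: "norm (E (Suc j) - L (E j)) \<le> \<epsilon> * norm (E j)"
      if j: "n0 + int j \<le> M" and Ej: "norm (E j) \<le> \<delta> / 2" for j
    proof -
      define Y where "Y = orbit f \<Lambda> r n0 y j"
      define xj where "xj = x (n0 + int j)"
      define p where "p = \<Lambda> (r * real_of_int (n0 + int j))"
      have Mj: "dist xj Xm < \<eta>" "dist p lm < \<delta>" using M[OF j] unfolding xj_def p_def by auto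
      have xb: "xj \<in> ball Xm \<delta>" using Mj \<eta>\<delta> \<delta> by (simp add: dist_commute)
      have pb: "p \<in> ball lm \<delta>" using Mj by (simp add: dist_commute)
      have "dist Y Xm \<le> norm (Y - xj) + dist xj Xm"
        by (metis dist_norm dist_triangle)
      also have "\<dots> < \<delta>" using Ej Mj \<eta>\<delta> unfolding E_def Y_def xj_def by simp
      finally have yb: "Y \<in> ball Xm \<delta>" by (simp add: dist_commute)
      have "x (n0 + int (Suc j)) = x ((n0 + int j) + 1)" by (simp add: ac_simps)
      also have "\<dots> = f xj p" using xsol unfolding xj_def p_def by blast
      finally have xs: "x (n0 + int (Suc j)) = f xj p" .
      have "E (Suc j) - L (E j) = f Y p - f xj p - L (Y - xj)"
        unfolding E_def xs by (simp add: Y_def xj_def p_def)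
      then show ?thesis using mvt[OF yb xb pb] unfolding E_def Y_def xj_def by simp
    qed
    have blk: "norm (E (k * N + i)) \<le> (a+1)^i * norm (E (k * N))
           \<and> (i = N \<longrightarrow> norm (E (k * N + N)) \<le> 1/2 * norm (E (k * N)))"
      if k: "n0 + int (k * N + i) \<le> M" and i: "i \<le> N" and e0: "norm (E (k * N)) \<le> 2 * \<eta>" for k i
    proof -
      define e where "e j = E (k * N + j)" for j
      have st: "norm (e (Suc j) - L (e j)) \<le> \<epsilon> * norm (e j)" if "j < i" "norm (e j) \<le> \<delta>/2" for j
        using stepE[of "k * N + j"] that k unfolding e_def by simp
      have e0': "(a+1)^N * norm (e 0) \<le> \<delta>/2"
      proof -
        have "(a+1)^N * norm (e 0) \<le> C * (2 * \<eta>)" unfolding C_def e_def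
          using e0 a0 by (intro mult_left_mono) auto
        then show ?thesis using C\<eta> by simp
      qed
      note B = block[OF Llin La a0 less_imp_le[OF \<epsilon>0] \<epsilon>1 LN small i st e0']
      show ?thesis using B(1)[of i] B(2) unfolding e_def by auto
    qed
    have R: "n0 + int (k * N) \<le> M \<Longrightarrow> norm (E (k * N)) \<le> (1/2)^k * (2 * \<eta>)" for k
    proof (induction k)
      case 0
      have "norm (E 0) = dist y (x n0)" unfolding E_def by (simp add: dist_norm)
      also have "\<dots> \<le> dist y Xm + dist (x n0) Xm" by (rule dist_triangle2)
      also have "\<dots> < 2 * \<eta>" using y M[of n0] 0 by (simp add: dist_commute)
      finally show ?case by simp
    next
      case (Suc k)
      have k: "n0 + int (k * N) \<le> M" using Suc.prems by simp
      have IH: "norm (E (k * N)) \<le> (1/2)^k * (2 * \<eta>)" using Suc.IH[OF k] .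
      have "(1/2::real)^k * (2 * \<eta>) \<le> 1 * (2 * \<eta>)" using \<eta>0 by (intro mult_right_mono) (auto simp: power_le_one)
      then have "norm (E (k * N)) \<le> 2 * \<eta>" using IH by simp
      from blk[of k N, OF _ order_refl this] Suc.prems
      have "norm (E (k * N + N)) \<le> 1/2 * norm (E (k * N))" by (simp add: add.commute)
      also have "\<dots> \<le> 1/2 * ((1/2)^k * (2 * \<eta>))" using IH by simp
      finally show ?case by (simp add: add.commute)
    qed
    define k where "k = j div N"
    define i where "i = j mod N"
    have j: "j = k * N + i" unfolding k_def i_def by simp
    have iN: "i \<le> N" unfolding i_def using N0 by (simp add: less_imp_le)
    have kM: "n0 + int (k * N) \<le> M" using n0 j by simp
    have Rk: "norm (E (k * N)) \<le> (1/2)^k * (2 * \<eta>)" using R[OF kM] .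
    have "(1/2::real)^k * (2 * \<eta>) \<le> 1 * (2 * \<eta>)" using \<eta>0 by (intro mult_right_mono) (auto simp: power_le_one)
    then have "norm (E (k * N)) \<le> 2 * \<eta>" using Rk by simp
    then have "norm (E j) \<le> (a+1)^i * norm (E (k * N))"
      using blk[of k i] n0 j iN by simp
    also have "\<dots> \<le> C * ((1/2)^k * (2 * \<eta>))"
    proof (rule mult_mono)
      show "(a+1)^i \<le> C" unfolding C_def using a0 iN by (intro power_increasing) auto
    qed (use Rk C1' in auto)
    finally show ?thesis unfolding E_def k_def by (simp add: ac_simps)
  qed
  show ?thesis
  proof (intro exI[of _ "ball Xm \<eta>"] conjI ballI allI)
    show "open (ball Xm \<eta>)" by simp
    show "Xm \<in> ball Xm \<eta>" using \<eta>0 by simp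
    fix y n1 assume y: "y \<in> ball Xm \<eta>"
    define T where "T = min n1 M"
    define z where "z n0 = orbit f \<Lambda> r n0 y (nat (T - n0))" for n0
    have zlim: "(z \<longlongrightarrow> x T) at_bot"
    proof (rule tendstoI)
      fix e :: real assume e: "e > 0"
      have "(\<lambda>k. C * (2 * \<eta>) * (1/2::real)^k) \<longlonglongrightarrow> C * (2 * \<eta>) * 0"
        by (intro tendsto_intros) simp
      then have "eventually (\<lambda>k. C * (2 * \<eta>) * (1/2::real)^k < e) sequentially"
        using e by (intro order_tendstoD(2)) auto
      then obtain K where K: "\<And>k. k \<ge> K \<Longrightarrow> C * (2 * \<eta>) * (1/2::real)^k < e"
        unfolding eventually_sequentially by blast
      show "eventually (\<lambda>n0. dist (z n0) (x T) < e) at_bot"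
      proof (rule eventually_at_bot_linorderI[of "T - int (K * N)"])
        fix n0 assume n0: "n0 \<le> T - int (K * N)"
        define j where "j = nat (T - n0)"
        have "int (K * N) \<ge> 0" by simp
        then have n0T: "n0 \<le> T" using n0 by linarith
        have jT: "n0 + int j = T" unfolding j_def using n0T by simp
        have jK: "K * N \<le> j" unfolding j_def using n0 by linarith
        have "K \<le> j div N" using div_le_mono[OF jK, of N] N0 by simp
        then have "(1/2::real)^(j div N) \<le> (1/2)^K" by (intro power_decreasing) auto
        then have "C * (2 * \<eta>) * (1/2::real)^(j div N) \<le> C * (2 * \<eta>) * (1/2)^K"
          using C1' \<eta>0 by (intro mult_left_mono) auto
        moreover have "norm (orbit f \<Lambda> r n0 y j - x (n0 + int j)) \<le> C * (2 * \<eta>) * (1/2) ^ (j div N)"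
        proof -
          have "n0 + int j \<le> M" using jT unfolding T_def by simp
          then show ?thesis by (rule est[OF y])
        qed
        ultimately have "norm (z n0 - x T) < e" using K[of K] jT unfolding z_def j_def by simp
        then show "dist (z n0) (x T) < e" by (simp add: dist_norm)
      qed
    qed
    define g where "g w = orbit f \<Lambda> r T w (nat (n1 - T))" for w
    have gc: "isCont g (x T)"
    proof -
      have "continuous_on UNIV g" unfolding g_def by (rule orbit_cont[OF fcont])
      then show ?thesis by (simp add: continuous_on_eq_continuous_at)
    qed
    have gx: "g (x T) = x n1"
    proof -
      have "g (x T) = x (T + int (nat (n1 - T)))" unfolding g_def
        by (rule orbit_sol[where x=x and f=f and \<Lambda>=\<Lambda> and r=r, OF xsol])
      moreover have "T + int (nat (n1 - T)) = n1" unfolding T_def by simp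
      ultimately show ?thesis by simp
    qed
    have lim: "((\<lambda>n0. g (z n0)) \<longlongrightarrow> x n1) at_bot"
      using isCont_tendsto_compose[OF gc zlim] gx by simp
    have ev: "eventually (\<lambda>n0. g (z n0) = phi f \<Lambda> r n1 n0 y) at_bot"
    proof (rule eventually_at_bot_linorderI[of T])
      fix n0 assume n0: "n0 \<le> T"
      have "T \<le> n1" unfolding T_def by simp
      then have "nat (n1 - n0) = nat (T - n0) + nat (n1 - T)" using n0 by (simp add: nat_add_distrib[symmetric])
      moreover have "n0 + int (nat (T - n0)) = T" using n0 by simp
      ultimately show "g (z n0) = phi f \<Lambda> r n1 n0 y"
        unfolding g_def z_def phi_def using orbit_add[of f \<Lambda> r n0 y "nat (T - n0)" "nat (n1 - T)"] by simp
    qed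
    have "((\<lambda>n0. phi f \<Lambda> r n1 n0 y) \<longlongrightarrow> x n1) at_bot"
      using lim tendsto_cong[OF ev] by simp
    then have "((\<lambda>n0. phi f \<Lambda> r n1 n0 y - x n1) \<longlongrightarrow> 0) at_bot"
      by (rule LIM_zero)
    then show "((\<lambda>n0. norm (phi f \<Lambda> r n1 n0 y - x n1)) \<longlongrightarrow> 0) at_bot"
      by (rule tendsto_norm_zero)
  qed
qed

end
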